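(* Let $s,d,k,q$ be positive integers with $q\ge s$ and $d\mid(q-s)$. Define $t_i=q$ if $d\mid i$ and $t_i=s$ if $d\nmid i$, for $1\le i\le k$. Then $$C_k(t_1,\dots,t_k)\le\left(s+k+\frac{q-s}{d}-1\right)_k.$$
   Context: For nonnegative integers $c_1,\dots,c_k$ with $\sum_i ic_i=k$, let $N(c_1,\dots,c_k)=\frac{k!}{1^{c_1}c_1!\,2^{c_2}c_2!\cdots k^{c_k}c_k!}$ be the number of permutations in the symmetric group $S_k$ having exactly $c_i$ cycles of length $i$ for each $i$. Define $C_k(t_1,\dots,t_k)=\sum_{\sum ic_i=k}N(c_1,\dots,c_k)t_1^{c_1}\cdots t_k^{c_k}$. For real $t$, $(t)_k=t(t-1)\cdots(t-k+1)$. *)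

theory Defs
  imports "HOL-Analysis.Analysis"
begin

text \<open>Cycle-type vectors for permutations of S_k: c i is the number of cycles of length i
 (1 \<le> i \<le> k), c i = 0 otherwise, and sum of i * c i equals k.\<close>
definition cycle_types :: "nat \<Rightarrow> (nat \<Rightarrow> nat) set" where
  "cycle_types k = {c. (\<forall>i. c i \<noteq> 0 \<longrightarrow> i \<in> {1..k}) \<and> (\<Sum>i=1..k. i * c i) = k}"

definition N_count :: "nat \<Rightarrow> (nat \<Rightarrow> nat) \<Rightarrow> real" where
  "N_count k c = fact k / (\<Prod>i=1..k. real i ^ c i * fact (c i))"

definition cycle_index :: "nat \<Rightarrow> (nat \<Rightarrow> real) \<Rightarrow> real" where
  "cycle_index k t = (\<Sum>c\<in>cycle_types k. N_count k c * (\<Prod>i=1..k. t i ^ c i))"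

definition falling :: "real \<Rightarrow> nat \<Rightarrow> real" where
  "falling x k = (\<Prod>j<k. x - real j)"

end

theory Submission imports Defs "HOL-Computational_Algebra.Formal_Power_Series"
begin
unbundle no vec_syntax
notation fps_nth (infixl \<open>$\<close> 75)

definition stretch :: "nat \<Rightarrow> real fps \<Rightarrow> real fps" where
  "stretch d f = Abs_fps (\<lambda>n. if d dvd n then f $ (n div d) else 0)"

lemma stretch_nth: "stretch d f $ n = (if d dvd n then f $ (n div d) else 0)"
  by (simp add: stretch_def)

lemma stretch_one: "d > 0 \<Longrightarrow> stretch d 1 = 1"
  by (auto simp: fps_eq_iff stretch_nth)

lemma stretch_mult:
  assumes d: "d > 0"
  shows "stretch d (f * g) = stretch d f * stretch d g"
proof (rule fps_ext)
  fix n
  let ?F = "\<lambda>i. stretch d f $ i * stretch d g $ (n - i)"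
  show "stretch d (f * g) $ n = (stretch d f * stretch d g) $ n"
  proof (cases "d dvd n")
    case True
    then obtain l where n: "n = d * l" by blast
    have "(\<Sum>i=0..n. ?F i) = (\<Sum>i\<in>(\<lambda>a. d*a)`{0..l}. ?F i)"
    proof (rule sum.mono_neutral_right)
      show "(\<lambda>a. d*a)`{0..l} \<subseteq> {0..n}" using n by auto
      show "\<forall>i\<in>{0..n} - (\<lambda>a. d*a)`{0..l}. ?F i = 0"
      proof
        fix i assume i: "i \<in> {0..n} - (\<lambda>a. d*a)`{0..l}"
        have "\<not> d dvd i"
        proof
          assume "d dvd i" then obtain a where "i = d*a" by blast
          with i n d show False by auto
        qed
        then show "?F i = 0" by (simp add: stretch_nth)
      qed
    qed simp
    also have "\<dots> = (\<Sum>a=0..l. ?F (d*a))"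
      using d by (simp add: sum.reindex inj_on_def)
    also have "\<dots> = (\<Sum>a=0..l. f $ a * g $ (l - a))"
    proof (rule sum.cong)
      fix a assume "a \<in> {0..l}"
      then have "n - d*a = d*(l-a)" using n by (simp add: diff_mult_distrib2)
      then show "?F (d*a) = f $ a * g $ (l - a)" using d by (simp add: stretch_nth)
    qed simp
    finally show ?thesis using n d by (simp add: stretch_nth fps_mult_nth)
  next
    case False
    have "?F i = 0" if "i \<in> {0..n}" for i
    proof (cases "d dvd i")
      case True
      have "\<not> d dvd (n - i)"
      proof
        assume "d dvd (n - i)"
        with True have "d dvd (n - i + i)" by (metis dvd_add add.commute)
        with that False show False by simp
      qed
      then show ?thesis by (simp add: stretch_nth)
    qed (simp add: stretch_nth)
    then have "(\<Sum>i=0..n. ?F i) = 0" by (intro sum.neutral) blast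
    then show ?thesis using False by (simp add: stretch_nth fps_mult_nth)
  qed
qed

lemma stretch_prod:
  assumes "d > 0"
  shows "stretch d (\<Prod>i\<in>I. F i) = (\<Prod>i\<in>I. stretch d (F i))"
proof (induction I rule: infinite_finite_induct)
  case (infinite A) then show ?case by (simp add: stretch_one assms)
next
  case empty then show ?case by (simp add: stretch_one assms)
next
  case (insert x F) then show ?case by (simp add: stretch_mult[OF assms])
qed

lemma stretch_stretch: "d > 0 \<Longrightarrow> j > 0 \<Longrightarrow> stretch d (stretch j f) = stretch (d*j) f"
  by (auto simp: fps_eq_iff stretch_nth div_mult2_eq dvd_mult_left
         intro: mult_dvd_mono elim!: dvdE dest: dvd_div_iff_mult[THEN iffD1, rotated])

definition E :: "real \<Rightarrow> nat \<Rightarrow> real fps" where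
  "E a i = stretch i (fps_exp a)"

lemma E_nth: "E a i $ n = (if i dvd n then a ^ (n div i) / fact (n div i) else 0)"
  by (simp add: E_def stretch_nth)

lemma E_add: "i > 0 \<Longrightarrow> E (a + b) i = E a i * E b i"
  by (simp add: E_def fps_exp_add_mult stretch_mult)

lemma E_zero: "i > 0 \<Longrightarrow> E 0 i = 1"
  by (simp add: E_def stretch_one)

lemma E_nth0: "E a i $ 0 = 1"
  by (simp add: E_nth)

lemma E_stretch: "d > 0 \<Longrightarrow> j > 0 \<Longrightarrow> E a (d * j) = stretch d (E a j)"
  by (simp add: E_def stretch_stretch)

lemma E_deriv:
  assumes i: "i > 0"
  shows "fps_deriv (E a i) = E a i * (fps_const (a * real i) * fps_X ^ (i - 1))"
proof (rule fps_ext)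
  fix n
  have r: "(E a i * (fps_const (a * real i) * fps_X ^ (i - 1))) $ n
      = a * real i * (if n < i - 1 then 0 else E a i $ (n - (i - 1)))"
    by (simp only: mult.commute[of "E a i"] mult.assoc fps_mult_left_const_nth fps_X_power_mult_nth)
  show "fps_deriv (E a i) $ n = (E a i * (fps_const (a * real i) * fps_X ^ (i - 1))) $ n"
  proof (cases "i dvd n + 1")
    case True
    then obtain l where l: "n + 1 = i * l" by blast
    with i have "l > 0" by (cases l) auto
    then obtain l' where l': "l = Suc l'" by (cases l) auto
    have nn: "\<not> n < i - 1" using l l' by simp
    have e: "n - (i - 1) = i * l'" using l l' i by simp
    have "fps_deriv (E a i) $ n = real (n+1) * (a ^ l / fact l)"
      using l i by (simp add: E_nth)
    also have "\<dots> = a * real i * (a ^ l' / fact l')"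
    proof -
      have hn: "real (n+1) = real i * (real l' + 1)" 
      proof -
        have "real (n+1) = real (i * Suc l')" using l l' by simp
        then show ?thesis by (simp add: algebra_simps)
      qed
      have hf: "(fact l :: real) = (real l' + 1) * fact l'" using l' by simp
      have "(real l' + 1) > 0" by simp
      have fp: "(fact l' :: real) > 0" by simp
      have "real (n+1) * (a ^ l / fact l) = real i * (real l' + 1) * (a * a ^ l') / ((real l' + 1) * fact l')"
        unfolding hn hf using l' by simp
      also have "\<dots> = (real l' + 1) * (real i * (a * a ^ l')) / ((real l' + 1) * fact l')"
        by (simp only: ac_simps)
      also have "\<dots> = real i * (a * a ^ l') / fact l'"
        by (rule nonzero_mult_divide_mult_cancel_left) (use \<open>(real l' + 1) > 0\<close> in simp)
      also have "\<dots> = a * real i * (a ^ l' / fact l')" by simp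
      finally show ?thesis .
    qed
    also have "\<dots> = (E a i * (fps_const (a * real i) * fps_X ^ (i - 1))) $ n"
      using r nn e i by (simp add: E_nth)
    finally show ?thesis .
  next
    case False
    have "\<not> i dvd n - (i - 1)" if "\<not> n < i - 1"
    proof
      assume "i dvd n - (i - 1)"
      then have "i dvd n - (i - 1) + i" by simp
      moreover have "n - (i - 1) + i = n + 1" using that i by simp
      ultimately show False using False by simp
    qed
    then show ?thesis using r False by (simp add: E_nth del: of_nat_Suc)
  qed
qed

lemma prod_deriv:
  assumes "finite I" "\<And>i. i \<in> I \<Longrightarrow> fps_deriv (F i) = F i * G i"
  shows "fps_deriv (\<Prod>i\<in>I. F i) = (\<Prod>i\<in>I. F i) * (\<Sum>i\<in>I. G i)"
  using assms
proof (induction I rule: finite_induct)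
  case empty then show ?case by simp
next
  case (insert x I)
  then show ?case by (simp add: algebra_simps)
qed

lemma prod_nth0: "(\<Prod>i\<in>I. F i) $ 0 = (\<Prod>i\<in>I. F i $ 0)"
  by (induction I rule: infinite_finite_induct) auto

definition P :: "nat \<Rightarrow> (nat \<Rightarrow> real) \<Rightarrow> real fps" where
  "P K t = (\<Prod>i=1..K. E (t i / real i) i)"

lemma P_nth0: "P K t $ 0 = 1"
  by (simp add: P_def prod_nth0 E_nth0)

lemma P_deriv:
  "fps_deriv (P K t) = P K t * (\<Sum>i=1..K. fps_const (t i) * fps_X ^ (i - 1))"
  unfolding P_def
proof (rule prod_deriv)
  fix i assume "i \<in> {1..K}"
  then have i: "i > 0" by simp
  then show "fps_deriv (E (t i / real i) i) = E (t i / real i) i * (fps_const (t i) * fps_X ^ (i - 1))"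
    using E_deriv[OF i, of "t i / real i"] by simp
qed simp

lemma T_nth: "(\<Sum>i=1..K. fps_const (t i) * fps_X ^ (i - 1)) $ l = (if l < K then t (l+1) else 0)"
proof -
  have "(\<Sum>i=1..K. fps_const (t i) * fps_X ^ (i - 1)) $ l = (\<Sum>i=1..K. if i = Suc l then t i else 0)"
    unfolding fps_sum_nth by (intro sum.cong) (auto simp: fps_X_power_nth)
  also have "\<dots> = (if l < K then t (l+1) else 0)"
    by (simp add: sum.delta)
  finally show ?thesis .
qed

lemma P_rec:
  assumes "n < K"
  shows "real (n+1) * P K t $ (n+1) = (\<Sum>j=0..n. P K t $ j * t (n - j + 1))"
proof -
  have "real (n+1) * P K t $ (n+1) = fps_deriv (P K t) $ n" by simp
  also have "\<dots> = (\<Sum>j=0..n. P K t $ j * t (n - j + 1))"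
    unfolding P_deriv fps_mult_nth T_nth using assms by (intro sum.cong) auto
  finally show ?thesis .
qed

fun r :: "real \<Rightarrow> nat \<Rightarrow> real" where
  "r c 0 = 1"
| "r c (Suc n) = (real n + c) / (real n + 1) * r c n"

lemma r_sum: "real (n+1) * r c (n+1) = c * (\<Sum>j=0..n. r c j)"
proof (induction n)
  case 0 then show ?case by simp
next
  case (Suc n)
  have rr: "r c (Suc (Suc n)) = (real (Suc n) + c) / (real (Suc n) + 1) * r c (Suc n)"
    by (rule r.simps(2))
  have "real (Suc n + 1) * r c (Suc n + 1) = (real (Suc n) + c) * r c (Suc n)"
    using rr by (simp del: r.simps add: field_simps)
  also have "\<dots> = real (n+1) * r c (n+1) + c * r c (Suc n)" by (simp del: r.simps add: algebra_simps)
  also have "\<dots> = c * (\<Sum>j=0..Suc n. r c j)" using Suc by (simp del: r.simps add: algebra_simps)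
  finally show ?case .
qed

lemma P_const: "n \<le> K \<Longrightarrow> P K (\<lambda>_. c) $ n = r c n"
proof (induction n rule: less_induct)
  case (less n)
  show ?case
  proof (cases n)
    case 0 then show ?thesis by (simp add: P_nth0)
  next
    case (Suc m)
    with less.prems have mK: "m < K" by simp
    have "real (m+1) * P K (\<lambda>_. c) $ (m+1) = (\<Sum>j=0..m. P K (\<lambda>_. c) $ j * c)"
      using P_rec[OF mK] by simp
    also have "\<dots> = (\<Sum>j=0..m. r c j * c)"
      by (intro sum.cong refl) (use less Suc in auto)
    also have "\<dots> = real (m+1) * r c (m+1)"
      using r_sum[of m c] by (simp del: r.simps add: sum_distrib_left mult_ac)
    finally show ?thesis using Suc by (simp del: r.simps)
  qed
qed

lemma r_nonneg: "c \<ge> 0 \<Longrightarrow> r c n \<ge> 0"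
  by (induction n) auto

lemma r_zero_Suc: "r 0 (Suc n) = 0"
  by (induction n) auto

lemma r_zero: "n > 0 \<Longrightarrow> r 0 n = 0"
  by (cases n) (auto simp del: r.simps simp: r_zero_Suc)

lemma r_mono:
  assumes "c \<ge> 1" "a \<le> b"
  shows "r c a \<le> r c b"
proof -
  have "r c n \<le> r c (Suc n)" for n
  proof -
    have "r c n \<ge> 0" using r_nonneg assms by simp
    moreover have "(real n + c) / (real n + 1) \<ge> 1" using assms by simp
    ultimately have "1 * r c n \<le> (real n + c) / (real n + 1) * r c n"
      by (intro mult_right_mono) auto
    then show ?thesis by simp
  qed
  then show ?thesis using lift_Suc_mono_le[of "r c"] assms(2) by blast
qed

lemma fact_r: "fact n * r c n = falling (c + real n - 1) n"
proof (induction n)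
  case 0 then show ?case by (simp add: falling_def)
next
  case (Suc n)
  have "falling (c + real (Suc n) - 1) (Suc n) = (c + real n) * falling (c + real n - 1) n"
    unfolding falling_def prod.lessThan_Suc_shift by (simp add: algebra_simps)
  also have "\<dots> = (c + real n) * (fact n * r c n)" using Suc by simp
  also have "\<dots> = fact (Suc n) * r c (Suc n)"
    by (simp add: field_simps del: of_nat_Suc) (simp add: algebra_simps)
  finally show ?case by simp
qed

definition CT :: "nat \<Rightarrow> nat \<Rightarrow> (nat \<Rightarrow> nat) set" where
  "CT n K = {c. (\<forall>i. c i \<noteq> 0 \<longrightarrow> i \<in> {1..n}) \<and> (\<Sum>i=1..n. i * c i) = K}"

definition wt :: "nat \<Rightarrow> (nat \<Rightarrow> real) \<Rightarrow> (nat \<Rightarrow> nat) \<Rightarrow> real" where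
  "wt n w c = (\<Prod>i=1..n. w i ^ c i / fact (c i))"

lemma CT_le: "c \<in> CT n K \<Longrightarrow> c i \<le> K"
proof -
  assume c: "c \<in> CT n K"
  show "c i \<le> K"
  proof (cases "i \<in> {1..n}")
    case True
    have "c i \<le> i * c i" using True by simp
    also have "\<dots> \<le> (\<Sum>j=1..n. j * c j)"
      using True by (intro member_le_sum) auto
    finally show ?thesis using c by (simp add: CT_def)
  next
    case False
    then have "c i = 0" using c unfolding CT_def by blast
    then show ?thesis by simp
  qed
qed

lemma CT_finite: "finite (CT n K)"
proof -
  have "CT n K \<subseteq> (\<lambda>g i. if i \<in> {1..n} then g i else 0) ` PiE {1..n} (\<lambda>_. {..K})"
  proof
    fix c assume c: "c \<in> CT n K"
    have "c = (\<lambda>i. if i \<in> {1..n} then restrict c {1..n} i else 0)"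
      using c by (auto simp: CT_def fun_eq_iff)
    moreover have "restrict c {1..n} \<in> PiE {1..n} (\<lambda>_. {..K})"
      using CT_le[OF c] by auto
    ultimately show "c \<in> (\<lambda>g i. if i \<in> {1..n} then g i else 0) ` PiE {1..n} (\<lambda>_. {..K})"
      by blast
  qed
  moreover have "finite (PiE {1..n} (\<lambda>_. {..K::nat}))" by (intro finite_PiE) auto
  ultimately show ?thesis using finite_subset by blast
qed

lemma Pgen: "(\<Prod>i=1..n. E (w i) i) $ K = (\<Sum>c\<in>CT n K. wt n w c)"
proof (induction n arbitrary: K)
  case 0
  have "CT 0 K = (if K = 0 then {\<lambda>_. 0} else {})"
    by (auto simp: CT_def fun_eq_iff)
  then show ?case by (simp add: wt_def)
next
  case (Suc n)
  define N where "N = Suc n"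
  define Q where "Q = (\<Prod>i=1..n. E (w i) i)"
  have N0: "N > 0" unfolding N_def by simp
  let ?F = "\<lambda>j. E (w N) N $ j * Q $ (K - j)"
  have "(\<Prod>i=1..Suc n. E (w i) i) = E (w N) N * Q"
    unfolding Q_def N_def by simp
  then have "(\<Prod>i=1..Suc n. E (w i) i) $ K = (\<Sum>j=0..K. ?F j)"
    by (simp add: fps_mult_nth)
  also have "\<dots> = (\<Sum>j\<in>(\<lambda>l. N*l)`{0..K div N}. ?F j)"
  proof (rule sum.mono_neutral_right)
    show "(\<lambda>l. N*l)`{0..K div N} \<subseteq> {0..K}"
      using N0 by (auto simp: less_eq_div_iff_mult_less_eq mult.commute)
    show "\<forall>j\<in>{0..K} - (\<lambda>l. N*l)`{0..K div N}. ?F j = 0"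
    proof
      fix j assume j: "j \<in> {0..K} - (\<lambda>l. N*l)`{0..K div N}"
      have "\<not> N dvd j"
      proof
        assume "N dvd j" then obtain l where l: "j = N*l" by blast
        with j N0 have "l \<le> K div N"
          by (auto simp: less_eq_div_iff_mult_less_eq mult.commute)
        with j l show False by auto
      qed
      then show "?F j = 0" by (simp add: E_nth)
    qed
  qed simp
  also have "\<dots> = (\<Sum>l=0..K div N. ?F (N*l))"
    using N0 by (simp add: sum.reindex inj_on_def)
  also have "\<dots> = (\<Sum>l=0..K div N. w N ^ l / fact l * (\<Sum>c\<in>CT n (K - N*l). wt n w c))"
    unfolding Q_def Suc.IH using N0 by (intro sum.cong refl) (simp add: E_nth)
  also have "\<dots> = (\<Sum>l=0..K div N. (\<Sum>c\<in>CT n (K - N*l). w N ^ l / fact l * wt n w c))"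
    by (simp add: sum_distrib_left)
  also have "\<dots> = (\<Sum>(l,c)\<in>(SIGMA l:{0..K div N}. CT n (K - N*l)). w N ^ l / fact l * wt n w c)"
    by (rule sum.Sigma) (auto simp: CT_finite)
  also have "\<dots> = (\<Sum>c'\<in>CT (Suc n) K. wt (Suc n) w c')"
  proof (rule sum.reindex_bij_witness[where i="\<lambda>c'. (c' N, c'(N := 0))" and j="\<lambda>(l,c). c(N := l)"])
    fix a assume a: "a \<in> (SIGMA l:{0..K div N}. CT n (K - N*l))"
    then obtain l c where lc: "a = (l, c)" "l \<le> K div N" "c \<in> CT n (K - N*l)" by auto
    have cN: "c N = 0" using lc(3) by (auto simp: CT_def N_def)
    show "(\<lambda>c'. (c' N, c'(N := 0))) ((\<lambda>(l,c). c(N := l)) a) = a"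
      using lc cN by (auto simp: fun_eq_iff)
    have "N * l \<le> K" using lc(2) N0 by (simp add: less_eq_div_iff_mult_less_eq mult.commute)
    have sm: "(\<Sum>i=1..n. i * (c(N := l)) i) = (\<Sum>i=1..n. i * c i)"
      by (intro sum.cong refl) (auto simp: N_def)
    have supp: "i \<in> {1..Suc n}" if "(c(N := l)) i \<noteq> 0" for i
    proof (cases "i = N")
      case True then show ?thesis by (simp add: N_def)
    next
      case False
      then have "c i \<noteq> 0" using that by simp
      then have "i \<in> {1..n}" using lc(3) unfolding CT_def by blast
      then show ?thesis by simp
    qed
    have "(\<Sum>i=1..Suc n. i * (c(N := l)) i) = K"
      using lc \<open>N * l \<le> K\<close> sm unfolding CT_def N_def by simp
    then show "(\<lambda>(l,c). c(N := l)) a \<in> CT (Suc n) K"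
      using lc supp unfolding CT_def by auto
    have pr: "(\<Prod>i=1..n. w i ^ (c(N := l)) i / fact ((c(N := l)) i)) = wt n w c"
      unfolding wt_def by (intro prod.cong refl) (auto simp: N_def)
    show "wt (Suc n) w ((\<lambda>(l,c). c(N := l)) a) = (case a of (l, c) \<Rightarrow> w N ^ l / fact l * wt n w c)"
      using lc pr unfolding wt_def N_def by simp
  next
    fix c' assume c': "c' \<in> CT (Suc n) K"
    show "(\<lambda>(l,c). c(N := l)) (c' N, c'(N := 0)) = c'" by simp
    have le: "N * c' N \<le> K"
    proof -
      have "N * c' N \<le> (\<Sum>i=1..Suc n. i * c' i)"
        unfolding N_def by (intro member_le_sum) auto
      then show ?thesis using c' by (simp add: CT_def)
    qed
    have "c' N \<le> K div N" using le N0 by (simp add: less_eq_div_iff_mult_less_eq mult.commute)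
    moreover have "c'(N := 0) \<in> CT n (K - N * c' N)"
    proof -
      have "(\<Sum>i=1..Suc n. i * c' i) = (\<Sum>i=1..n. i * c' i) + N * c' N"
        unfolding N_def by simp
      moreover have "(\<Sum>i=1..n. i * (c'(N := 0)) i) = (\<Sum>i=1..n. i * c' i)"
        by (intro sum.cong refl) (auto simp: N_def)
      moreover have "i \<in> {1..n}" if "(c'(N := 0)) i \<noteq> 0" for i
      proof -
        have "i \<noteq> N" "c' i \<noteq> 0" using that by (auto split: if_splits)
        then have "i \<in> {1..Suc n}" using c' unfolding CT_def by blast
        with \<open>i \<noteq> N\<close> show ?thesis by (auto simp: N_def)
      qed
      ultimately show ?thesis using c' unfolding CT_def by auto
    qed
    ultimately show "(\<lambda>c'. (c' N, c'(N := 0))) c' \<in> (SIGMA l:{0..K div N}. CT n (K - N*l))"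
      by auto
  qed
  finally show ?case .
qed

lemma cycle_P: "cycle_index k t = fact k * P k t $ k"
proof -
  have "P k t $ k = (\<Sum>c\<in>CT k k. wt k (\<lambda>i. t i / real i) c)"
    unfolding P_def by (rule Pgen)
  moreover have "cycle_types k = CT k k" by (simp add: cycle_types_def CT_def)
  moreover have "N_count k c * (\<Prod>i=1..k. t i ^ c i) = fact k * wt k (\<lambda>i. t i / real i) c" for c
    unfolding N_count_def wt_def
    by (simp add: prod_dividef power_divide prod.distrib)
  ultimately show ?thesis unfolding cycle_index_def by (simp add: sum_distrib_left)
qed

lemma P_mult: "P K t * P K u = P K (\<lambda>i. t i + u i)"
  unfolding P_def prod.distrib[symmetric]
  by (intro prod.cong refl) (simp add: E_add add_divide_distrib)

lemma P_split:
  fixes s q d k mm :: nat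
  assumes d: "d > 0" and qs: "real q = real s + real d * real mm"
  shows "P k (\<lambda>i. if d dvd i then real q else real s)
       = P k (\<lambda>_. real s) * stretch d (P (k div d) (\<lambda>_. real mm))"
proof -
  define u where "u i = (if d dvd i then real d * real mm else 0)" for i
  have "P k (\<lambda>i. if d dvd i then real q else real s) = P k (\<lambda>_. real s) * P k u"
    unfolding P_mult by (intro arg_cong[where f="P k"]) (auto simp: u_def qs)
  moreover have "P k u = stretch d (P (k div d) (\<lambda>_. real mm))"
  proof -
    have "P k u = (\<Prod>i\<in>{i\<in>{1..k}. d dvd i}. E (u i / real i) i)"
      unfolding P_def
    proof (rule prod.mono_neutral_right)
      show "\<forall>i\<in>{1..k} - {i \<in> {1..k}. d dvd i}. E (u i / real i) i = 1"
      proof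
        fix i assume "i \<in> {1..k} - {i \<in> {1..k}. d dvd i}"
        then have "u i = 0" "i > 0" by (auto simp: u_def)
        then show "E (u i / real i) i = 1" by (simp add: E_zero)
      qed
    qed auto
    also have "{i\<in>{1..k}. d dvd i} = (\<lambda>j. d*j) ` {1..k div d}"
    proof (intro set_eqI iffI)
      fix i assume "i \<in> {i\<in>{1..k}. d dvd i}"
      then obtain j where "i = d * j" "1 \<le> i" "i \<le> k" by auto
      moreover then have "j \<ge> 1" "j \<le> k div d" using d
        by (auto simp: less_eq_div_iff_mult_less_eq mult.commute)
      ultimately show "i \<in> (\<lambda>j. d*j) ` {1..k div d}" by auto
    next
      fix i assume "i \<in> (\<lambda>j. d*j) ` {1..k div d}"
      then obtain j where "i = d * j" "j \<in> {1..k div d}" by blast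
      then have "i = d * j" "1 \<le> j" "j \<le> k div d" by auto
      then show "i \<in> {i\<in>{1..k}. d dvd i}" using d
        by (auto simp: less_eq_div_iff_mult_less_eq mult.commute)
    qed
    also have "(\<Prod>i\<in>(\<lambda>j. d*j) ` {1..k div d}. E (u i / real i) i)
        = (\<Prod>j\<in>{1..k div d}. E (u (d*j) / real (d*j)) (d*j))"
      using d by (simp add: prod.reindex inj_on_def)
    also have "\<dots> = (\<Prod>j\<in>{1..k div d}. stretch d (E (real mm / real j) j))"
      using d by (intro prod.cong refl) (auto simp: u_def E_stretch)
    also have "\<dots> = stretch d (P (k div d) (\<lambda>_. real mm))"
      unfolding P_def by (simp add: stretch_prod d)
    finally show ?thesis .
  qed
  ultimately show ?thesis by simp
qed

theorem mainTheorem5: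
  fixes s d k q :: nat
  assumes "s > 0" "d > 0" "k > 0" "q > 0" "q \<ge> s" "d dvd (q - s)"
  shows "cycle_index k (\<lambda>i. if d dvd i then real q else real s)
           \<le> falling (real s + real k + (real q - real s) / real d - 1) k"
proof -
  obtain mm where mm: "q - s = d * mm" using assms(6) by blast
  have qs: "real q = real s + real d * real mm"
    using mm assms(5) by (metis le_add_diff_inverse of_nat_add of_nat_mult)
  have mq: "(real q - real s) / real d = real mm" using qs assms(2) by simp
  define A where "A = P k (\<lambda>_. real s)"
  define B where "B = stretch d (P (k div d) (\<lambda>_. real mm))"
  define C where "C = P k (\<lambda>_. real mm)"
  have "cycle_index k (\<lambda>i. if d dvd i then real q else real s) = fact k * (A * B) $ k"
    unfolding cycle_P A_def B_def P_split[OF assms(2) qs] ..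
  also have "(A * B) $ k \<le> (A * C) $ k"
    unfolding fps_mult_nth
  proof (intro sum_mono mult_left_mono)
    fix j assume j: "j \<in> {0..k}"
    show "A $ j \<ge> 0" unfolding A_def using j by (simp add: P_const r_nonneg del: r.simps)
    define l where "l = k - j"
    have lk: "l \<le> k" unfolding l_def by simp
    show "B $ (k - j) \<le> C $ (k - j)"
      unfolding l_def[symmetric]
    proof (cases "d dvd l")
      case True
      have ld: "l div d \<le> k div d" using lk by (rule div_le_mono)
      have "B $ l = r (real mm) (l div d)" unfolding B_def using True ld
        by (simp add: stretch_nth P_const del: r.simps)
      also have "\<dots> \<le> r (real mm) l"
      proof (cases "mm = 0")
        case True
        show ?thesis
        proof (cases "l = 0")
          case False
          with \<open>d dvd l\<close> assms(2) have "l div d > 0"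
            by (metis dvd_div_eq_0_iff gr0I)
          with False True show ?thesis by (simp add: r_zero del: r.simps)
        qed simp
      next
        case False
        then show ?thesis by (intro r_mono) auto
      qed
      also have "\<dots> = C $ l" unfolding C_def using lk by (simp add: P_const del: r.simps)
      finally show "B $ l \<le> C $ l" .
    next
      case False
      have "C $ l \<ge> 0" unfolding C_def using lk by (simp add: P_const r_nonneg del: r.simps)
      then show "B $ l \<le> C $ l" using False unfolding B_def by (simp add: stretch_nth)
    qed
  qed
  also have "(A * C) $ k = r (real s + real mm) k"
    unfolding A_def C_def P_mult by (simp add: P_const del: r.simps)
  finally have "cycle_index k (\<lambda>i. if d dvd i then real q else real s)
      \<le> fact k * r (real s + real mm) k" by simp
  also have "\<dots> = falling (real s + real k + (real q - real s) / real d - 1) k"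
    unfolding fact_r mq by (simp add: algebra_simps)
  finally show ?thesis .
qed

end
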